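(* Let $f:T\to T'$ be a homomorphism of pre-trusses. (1) For all $z\in\operatorname{im}f$, $f^{-1}(z)$ is a paragon in $T$. Moreover, if $P'$ is a paragon in the pre-truss $\operatorname{im}f$, then $f^{-1}(P')$ is a paragon in $T$. (2) If $P$ is a paragon in $T$, then $f(P)$ is a paragon in $\operatorname{im}f$.
   Context: A heap is a set with a ternary operation $[-,-,-]$ satisfying $[a_1,a_2,[a_3,a_4,a_5]]=[[a_1,a_2,a_3],a_4,a_5]$ and $[a,a,b]=b=[b,a,a]$. A pre-truss is a heap with an associative binary operation; a homomorphism of pre-trusses preserves both the ternary operation and the multiplication; its image is a pre-truss. A normal sub-heap is a non-empty subset $S$ closed under $[-,-,-]$ with $[[a,e,s],a,e]\in S$ for all $a$ and $e,s\in S$; $a\sim_S b$ iff $[a,b,s]\in S$ for some (equivalently all) $s\in S$. A sub-heap $S$ is closed if $[ts',ts,s]\in S$ and $[s't,st,s]\in S$ for all $s,s'\in S$ and $t$ in the pre-truss. A paragon is a non-empty normal sub-heap $P$ such that every equivalence class of $\sim_P$ is a closed sub-heap. *)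

theory Defs
  imports Main
begin

definition heap :: "'a set \<Rightarrow> ('a \<Rightarrow> 'a \<Rightarrow> 'a \<Rightarrow> 'a) \<Rightarrow> bool" where
  "heap H t \<longleftrightarrow>
     (\<forall>a\<in>H. \<forall>b\<in>H. \<forall>c\<in>H. t a b c \<in> H) \<and>
     (\<forall>a1\<in>H. \<forall>a2\<in>H. \<forall>a3\<in>H. \<forall>a4\<in>H. \<forall>a5\<in>H.
        t a1 a2 (t a3 a4 a5) = t (t a1 a2 a3) a4 a5) \<and>
     (\<forall>a\<in>H. \<forall>b\<in>H. t a a b = b \<and> t b a a = b)"

definition pretruss :: "'a set \<Rightarrow> ('a \<Rightarrow> 'a \<Rightarrow> 'a \<Rightarrow> 'a) \<Rightarrow> ('a \<Rightarrow> 'a \<Rightarrow> 'a) \<Rightarrow> bool" where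
  "pretruss T t m \<longleftrightarrow> heap T t \<and>
     (\<forall>a\<in>T. \<forall>b\<in>T. m a b \<in> T) \<and>
     (\<forall>a\<in>T. \<forall>b\<in>T. \<forall>c\<in>T. m (m a b) c = m a (m b c))"

definition pretruss_hom ::
  "'a set \<Rightarrow> ('a \<Rightarrow> 'a \<Rightarrow> 'a \<Rightarrow> 'a) \<Rightarrow> ('a \<Rightarrow> 'a \<Rightarrow> 'a) \<Rightarrow>
   'b set \<Rightarrow> ('b \<Rightarrow> 'b \<Rightarrow> 'b \<Rightarrow> 'b) \<Rightarrow> ('b \<Rightarrow> 'b \<Rightarrow> 'b) \<Rightarrow> ('a \<Rightarrow> 'b) \<Rightarrow> bool" where
  "pretruss_hom T t m T' t' m' f \<longleftrightarrow> pretruss T t m \<and> pretruss T' t' m' \<and>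
     (\<forall>a\<in>T. f a \<in> T') \<and>
     (\<forall>a\<in>T. \<forall>b\<in>T. \<forall>c\<in>T. f (t a b c) = t' (f a) (f b) (f c)) \<and>
     (\<forall>a\<in>T. \<forall>b\<in>T. f (m a b) = m' (f a) (f b))"

definition subheap :: "'a set \<Rightarrow> ('a \<Rightarrow> 'a \<Rightarrow> 'a \<Rightarrow> 'a) \<Rightarrow> 'a set \<Rightarrow> bool" where
  "subheap H t S \<longleftrightarrow> S \<subseteq> H \<and> (\<forall>a\<in>S. \<forall>b\<in>S. \<forall>c\<in>S. t a b c \<in> S)"

definition normal_subheap :: "'a set \<Rightarrow> ('a \<Rightarrow> 'a \<Rightarrow> 'a \<Rightarrow> 'a) \<Rightarrow> 'a set \<Rightarrow> bool" where
  "normal_subheap H t S \<longleftrightarrow> S \<noteq> {} \<and> subheap H t S \<and>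
     (\<forall>a\<in>H. \<forall>e\<in>S. \<forall>s\<in>S. t (t a e s) a e \<in> S)"

definition heap_sim :: "'a set \<Rightarrow> ('a \<Rightarrow> 'a \<Rightarrow> 'a \<Rightarrow> 'a) \<Rightarrow> 'a set \<Rightarrow> 'a \<Rightarrow> 'a \<Rightarrow> bool" where
  "heap_sim H t S a b \<longleftrightarrow> a \<in> H \<and> b \<in> H \<and> (\<exists>s\<in>S. t a b s \<in> S)"

definition sim_class :: "'a set \<Rightarrow> ('a \<Rightarrow> 'a \<Rightarrow> 'a \<Rightarrow> 'a) \<Rightarrow> 'a set \<Rightarrow> 'a \<Rightarrow> 'a set" where
  "sim_class H t S a = {b. heap_sim H t S a b}"

definition closed_subheap ::
  "'a set \<Rightarrow> ('a \<Rightarrow> 'a \<Rightarrow> 'a \<Rightarrow> 'a) \<Rightarrow> ('a \<Rightarrow> 'a \<Rightarrow> 'a) \<Rightarrow> 'a set \<Rightarrow> bool" where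
  "closed_subheap T t m S \<longleftrightarrow> subheap T t S \<and>
     (\<forall>s\<in>S. \<forall>s'\<in>S. \<forall>x\<in>T. t (m x s') (m x s) s \<in> S \<and> t (m s' x) (m s x) s \<in> S)"

definition paragon ::
  "'a set \<Rightarrow> ('a \<Rightarrow> 'a \<Rightarrow> 'a \<Rightarrow> 'a) \<Rightarrow> ('a \<Rightarrow> 'a \<Rightarrow> 'a) \<Rightarrow> 'a set \<Rightarrow> bool" where
  "paragon T t m P \<longleftrightarrow> normal_subheap T t P \<and>
     (\<forall>a\<in>T. closed_subheap T t m (sim_class T t P a))"

end

theory Submission
  imports Defs
begin

lemma heap_inner:
  assumes h: "heap H t" and H: "a\<in>H" "b\<in>H" "c\<in>H" "d\<in>H" "e\<in>H"
  shows "t a (t b c d) e = t (t a d c) b e"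
proof -
  have cl: "\<And>x y z. x\<in>H \<Longrightarrow> y\<in>H \<Longrightarrow> z\<in>H \<Longrightarrow> t x y z \<in> H" using h unfolding heap_def by blast
  have as: "\<And>x y z v w. x\<in>H \<Longrightarrow> y\<in>H \<Longrightarrow> z\<in>H \<Longrightarrow> v\<in>H \<Longrightarrow> w\<in>H \<Longrightarrow> t x y (t z v w) = t (t x y z) v w"
    using h unfolding heap_def by blast
  have m1: "\<And>x y. x\<in>H \<Longrightarrow> y\<in>H \<Longrightarrow> t x x y = y" and m2: "\<And>x y. x\<in>H \<Longrightarrow> y\<in>H \<Longrightarrow> t y x x = y"
    using h unfolding heap_def by blast+
  define u where "u = t b c d"
  have uH: "u \<in> H" using cl H u_def by simp
  have b: "b = t u d c" using H by (simp add: u_def as[symmetric] m1 m2)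
  have adc: "t a d c = t a u b" using H uH by (simp add: b as m2)
  have "t (t a d c) b e = t (t a u b) b e" using adc by simp
  also have "\<dots> = t a u (t b b e)" using H uH by (simp add: as)
  also have "\<dots> = t a u e" using H by (simp add: m1)
  finally show ?thesis by (simp add: u_def)
qed

lemma hom_facts:
  assumes hom: "pretruss_hom T t m T' t' m' f"
  shows "\<And>a b c. a\<in>T \<Longrightarrow> b\<in>T \<Longrightarrow> c\<in>T \<Longrightarrow> f (t a b c) = t' (f a) (f b) (f c)"
   and "\<And>a b. a\<in>T \<Longrightarrow> b\<in>T \<Longrightarrow> f (m a b) = m' (f a) (f b)"
   and "\<And>a b c. a\<in>T \<Longrightarrow> b\<in>T \<Longrightarrow> c\<in>T \<Longrightarrow> t a b c \<in> T"
   and "\<And>a b. a\<in>T \<Longrightarrow> b\<in>T \<Longrightarrow> m a b \<in> T"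
   and "\<And>a. a\<in>T \<Longrightarrow> f a \<in> T'"
   and "heap T t" and "heap T' t'"
   and "\<And>a b. a\<in>T' \<Longrightarrow> b\<in>T' \<Longrightarrow> m' a b \<in> T'"
proof -
  have H: "pretruss T t m" "pretruss T' t' m'"
    and F: "\<forall>a\<in>T. f a \<in> T'" "\<forall>a\<in>T. \<forall>b\<in>T. \<forall>c\<in>T. f (t a b c) = t' (f a) (f b) (f c)"
      "\<forall>a\<in>T. \<forall>b\<in>T. f (m a b) = m' (f a) (f b)"
    using hom unfolding pretruss_hom_def by blast+
  have "heap T t" "\<forall>a\<in>T. \<forall>b\<in>T. m a b \<in> T" using H(1) unfolding pretruss_def by blast+
  moreover have "heap T' t'" "\<forall>a\<in>T'. \<forall>b\<in>T'. m' a b \<in> T'" using H(2) unfolding pretruss_def by blast+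
  moreover have "\<forall>a\<in>T. \<forall>b\<in>T. \<forall>c\<in>T. t a b c \<in> T" using \<open>heap T t\<close> unfolding heap_def by blast
  ultimately show "\<And>a b c. a\<in>T \<Longrightarrow> b\<in>T \<Longrightarrow> c\<in>T \<Longrightarrow> f (t a b c) = t' (f a) (f b) (f c)"
   and "\<And>a b. a\<in>T \<Longrightarrow> b\<in>T \<Longrightarrow> f (m a b) = m' (f a) (f b)"
   and "\<And>a b c. a\<in>T \<Longrightarrow> b\<in>T \<Longrightarrow> c\<in>T \<Longrightarrow> t a b c \<in> T"
   and "\<And>a b. a\<in>T \<Longrightarrow> b\<in>T \<Longrightarrow> m a b \<in> T"
   and "\<And>a. a\<in>T \<Longrightarrow> f a \<in> T'"
   and "heap T t" and "heap T' t'"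
   and "\<And>a b. a\<in>T' \<Longrightarrow> b\<in>T' \<Longrightarrow> m' a b \<in> T'" using F by simp_all
qed

lemma part1b:
  assumes hom: "pretruss_hom T t m T' t' m' f" and P': "paragon (f ` T) t' m' P'"
  shows "paragon T t m {x\<in>T. f x \<in> P'}"
proof -
  let ?Q = "{x\<in>T. f x \<in> P'}"
  note ft = hom_facts(1)[OF hom] and fm = hom_facts(2)[OF hom]
    and tcl = hom_facts(3)[OF hom] and mcl = hom_facts(4)[OF hom]
  have PN: "normal_subheap (f ` T) t' P'" and PC: "\<forall>y\<in>f ` T. closed_subheap (f ` T) t' m' (sim_class (f ` T) t' P' y)"
    using P' unfolding paragon_def by blast+
  have Psub: "P' \<subseteq> f ` T" and Pne: "P' \<noteq> {}" and Pcl: "\<forall>a\<in>P'. \<forall>b\<in>P'. \<forall>c\<in>P'. t' a b c \<in> P'"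
    and Pnorm: "\<forall>a \<in> f ` T. \<forall>e\<in>P'. \<forall>s\<in>P'. t' (t' a e s) a e \<in> P'"
    using PN unfolding normal_subheap_def subheap_def by blast+
  have N: "normal_subheap T t ?Q"
    unfolding normal_subheap_def subheap_def
  proof (intro conjI ballI)
    show "?Q \<noteq> {}" using Psub Pne by blast
    show "?Q \<subseteq> T" by blast
  next
    fix a b c assume h: "a \<in> ?Q" "b \<in> ?Q" "c \<in> ?Q"
    have "t a b c \<in> T" using h tcl by simp
    moreover have "f (t a b c) \<in> P'" using h ft[of a b c] Pcl by simp
    ultimately show "t a b c \<in> ?Q" by simp
  next
    fix a e s assume h: "a \<in> T" "e \<in> ?Q" "s \<in> ?Q"
    have "t a e s \<in> T" using h tcl by simp
    then have "t (t a e s) a e \<in> T" "f (t (t a e s) a e) = t' (t' (f a) (f e) (f s)) (f a) (f e)"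
      using h tcl ft by simp_all
    moreover have "t' (t' (f a) (f e) (f s)) (f a) (f e) \<in> P'" using h Pnorm by simp
    ultimately show "t (t a e s) a e \<in> ?Q" by simp
  qed
  have C2: "closed_subheap T t m (sim_class T t ?Q a)" if aT: "a \<in> T" for a
  proof -
    let ?S = "sim_class (f ` T) t' P' (f a)"
    have cls: "sim_class T t ?Q a = {b\<in>T. f b \<in> ?S}"
    proof (intro set_eqI iffI)
      fix b assume "b \<in> sim_class T t ?Q a"
      then obtain s where h: "a \<in> T" "b \<in> T" "s \<in> ?Q" "t a b s \<in> ?Q" unfolding sim_class_def heap_sim_def by blast
      then have "t' (f a) (f b) (f s) \<in> P'" using ft by simp
      then have "f b \<in> ?S" unfolding sim_class_def heap_sim_def using h by blast
      then show "b \<in> {b\<in>T. f b \<in> ?S}" using h by simp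
    next
      fix b assume "b \<in> {b\<in>T. f b \<in> ?S}"
      then obtain s' where b: "b\<in>T" "s'\<in>P'" "t' (f a) (f b) s' \<in> P'"
        unfolding sim_class_def heap_sim_def by blast
      then obtain s where s: "s \<in> T" "s' = f s" using Psub by blast
      then have "t a b s \<in> ?Q" using b aT ft tcl by simp
      moreover have "s \<in> ?Q" using s b by simp
      ultimately show "b \<in> sim_class T t ?Q a"
        unfolding sim_class_def heap_sim_def using b aT by blast
    qed
    have C: "closed_subheap (f ` T) t' m' ?S" using PC aT by blast
    have Csub: "\<forall>x\<in>?S. \<forall>y\<in>?S. \<forall>z\<in>?S. t' x y z \<in> ?S"
      and Ccl: "\<forall>s\<in>?S. \<forall>s'\<in>?S. \<forall>x\<in>f ` T. t' (m' x s') (m' x s) s \<in> ?S \<and> t' (m' s' x) (m' s x) s \<in> ?S"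
      using C unfolding closed_subheap_def subheap_def by blast+
    show ?thesis unfolding cls closed_subheap_def subheap_def
    proof (intro conjI ballI)
      show "{b \<in> T. f b \<in> ?S} \<subseteq> T" by blast
    next
      fix x y z assume h: "x \<in> {b \<in> T. f b \<in> ?S}" "y \<in> {b \<in> T. f b \<in> ?S}" "z \<in> {b \<in> T. f b \<in> ?S}"
      have "t' (f x) (f y) (f z) \<in> ?S" using h Csub by simp
      then show "t x y z \<in> {b \<in> T. f b \<in> ?S}" using h ft tcl by simp
    next
      fix s s' x assume h: "s \<in> {b \<in> T. f b \<in> ?S}" "s' \<in> {b \<in> T. f b \<in> ?S}" "x \<in> T"
      have fx: "f x \<in> f ` T" using h by simp
      have i: "t' (m' (f x) (f s')) (m' (f x) (f s)) (f s) \<in> ?S" "t' (m' (f s') (f x)) (m' (f s) (f x)) (f s) \<in> ?S"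
        using Ccl h fx by simp_all
      have T: "m x s' \<in> T" "m x s \<in> T" "m s' x \<in> T" "m s x \<in> T" using h mcl by simp_all
      show "t (m x s') (m x s) s \<in> {b \<in> T. f b \<in> ?S}"
        using i(1) T h ft fm tcl by simp
      show "t (m s' x) (m s x) s \<in> {b \<in> T. f b \<in> ?S}"
        using i(2) T h ft fm tcl by simp
    qed
  qed
  show ?thesis unfolding paragon_def using N C2 by blast
qed

lemma part2:
  assumes hom: "pretruss_hom T t m T' t' m' f" and P: "paragon T t m P"
  shows "paragon (f ` T) t' m' (f ` P)"
proof -
  note ft = hom_facts(1)[OF hom] and fm = hom_facts(2)[OF hom]
    and tcl = hom_facts(3)[OF hom] and mcl = hom_facts(4)[OF hom] and fT = hom_facts(5)[OF hom]
    and hT = hom_facts(6)[OF hom] and hT' = hom_facts(7)[OF hom]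
  have as': "\<forall>x\<in>T'. \<forall>y\<in>T'. \<forall>z\<in>T'. \<forall>v\<in>T'. \<forall>w\<in>T'. t' x y (t' z v w) = t' (t' x y z) v w"
    and m12': "\<forall>x\<in>T'. \<forall>y\<in>T'. t' x x y = y \<and> t' y x x = y"
    using hT' unfolding heap_def by blast+
  have m12: "\<forall>x\<in>T. \<forall>y\<in>T. t x x y = y \<and> t y x x = y"
    using hT unfolding heap_def by blast
  have PN: "normal_subheap T t P" and PC: "\<forall>a\<in>T. closed_subheap T t m (sim_class T t P a)"
    using P unfolding paragon_def by blast+
  have Psub: "P \<subseteq> T" and Pne: "P \<noteq> {}" and Pcl: "\<forall>a\<in>P. \<forall>b\<in>P. \<forall>c\<in>P. t a b c \<in> P"
    and Pnorm: "\<forall>a\<in>T. \<forall>e\<in>P. \<forall>s\<in>P. t (t a e s) a e \<in> P"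
    using PN unfolding normal_subheap_def subheap_def by blast+
  have N: "normal_subheap (f ` T) t' (f ` P)"
    unfolding normal_subheap_def subheap_def
  proof (intro conjI ballI)
    show "f ` P \<noteq> {}" using Pne by blast
    show "f ` P \<subseteq> f ` T" using Psub by blast
  next
    fix a b c assume "a \<in> f ` P" "b \<in> f ` P" "c \<in> f ` P"
    then obtain x y z where h: "x\<in>P" "y\<in>P" "z\<in>P" "a = f x" "b = f y" "c = f z" by blast
    then have "x \<in> T" "y \<in> T" "z \<in> T" using Psub by blast+
    then have "t' a b c = f (t x y z)" using h ft by simp
    moreover have "t x y z \<in> P" using h Pcl by simp
    ultimately show "t' a b c \<in> f ` P" by simp
  next
    fix a e s assume "a \<in> f ` T" "e \<in> f ` P" "s \<in> f ` P"
    then obtain x y z where h: "x\<in>T" "y\<in>P" "z\<in>P" "a = f x" "e = f y" "s = f z" by blast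
    then have T: "y \<in> T" "z \<in> T" using Psub by blast+
    then have "t x y z \<in> T" using h tcl by simp
    then have "t' (t' a e s) a e = f (t (t x y z) x y)" using h T ft tcl by simp
    moreover have "t (t x y z) x y \<in> P" using h Pnorm by simp
    ultimately show "t' (t' a e s) a e \<in> f ` P" by simp
  qed
  have C2: "closed_subheap (f ` T) t' m' (sim_class (f ` T) t' (f ` P) y)" for y
  proof (cases "y \<in> f ` T")
    case False
    then have "sim_class (f ` T) t' (f ` P) y = {}" unfolding sim_class_def heap_sim_def by blast
    then show ?thesis unfolding closed_subheap_def subheap_def by simp
  next
    case True
    then obtain a where aT: "a \<in> T" and y: "y = f a" by blast
    let ?C = "sim_class T t P a"
    have cls: "sim_class (f ` T) t' (f ` P) y = f ` ?C"
    proof (intro set_eqI iffI)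
      fix c assume "c \<in> sim_class (f ` T) t' (f ` P) y"
      then obtain b s' where b0: "b \<in> T" "c = f b" "s' \<in> f ` P" "t' (f a) (f b) s' \<in> f ` P"
        unfolding sim_class_def heap_sim_def y by blast
      then obtain s p where b: "b \<in> T" "c = f b" "s \<in> P" "p \<in> P" "t' (f a) (f b) (f s) = f p"
        by blast
      have sT: "s \<in> T" "p \<in> T" using b Psub by blast+
      have T': "f a \<in> T'" "f b \<in> T'" "f s \<in> T'" "f p \<in> T'" using aT b sT fT by simp_all
      have e1: "t' (f p) (f s) (f b) = f a"
      proof -
        have "t' (f p) (f s) (f b) = t' (f a) (f b) (t' (f s) (f s) (f b))"
          using b(5) as' T' by simp
        also have "\<dots> = f a" using m12' T' by simp
        finally show ?thesis .
      qed
      have e2: "t' (f s) (f p) (f a) = f b"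
      proof -
        have "t' (f s) (f p) (f a) = t' (f s) (f p) (t' (f p) (f s) (f b))" using e1 by simp
        also have "\<dots> = t' (t' (f s) (f p) (f p)) (f s) (f b)" using as' T' by simp
        also have "\<dots> = f b" using m12' T' by simp
        finally show ?thesis .
      qed
      define b' where "b' = t s p a"
      have b'T: "b' \<in> T" using tcl sT aT b'_def by simp
      have fb': "f b' = c" using e2 b ft sT aT b'_def by simp
      have "t a b' s = t (t a a p) s s" using heap_inner[OF hT aT sT(1) sT(2) aT sT(1)] b'_def by simp
      also have "\<dots> = p" using aT sT m12 by simp
      finally have "b' \<in> ?C" unfolding sim_class_def heap_sim_def using aT b'T b by auto
      then show "c \<in> f ` ?C" using fb' by blast
    next
      fix c assume "c \<in> f ` ?C"
      then obtain b s where h: "c = f b" "b \<in> T" "s \<in> P" "t a b s \<in> P"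
        unfolding sim_class_def heap_sim_def by blast
      have sT: "s \<in> T" using h Psub by blast
      have "t' (f a) (f b) (f s) = f (t a b s)" using h aT sT ft by simp
      then have "t' y c (f s) \<in> f ` P" using h y by simp
      moreover have "f s \<in> f ` P" "y \<in> f ` T" "c \<in> f ` T" using h aT y by simp_all
      ultimately show "c \<in> sim_class (f ` T) t' (f ` P) y"
        unfolding sim_class_def heap_sim_def by blast
    qed
    have C: "closed_subheap T t m ?C" using PC aT by blast
    have Csub: "\<forall>x\<in>?C. \<forall>y\<in>?C. \<forall>z\<in>?C. t x y z \<in> ?C"
      and Ccl: "\<forall>s\<in>?C. \<forall>s'\<in>?C. \<forall>x\<in>T. t (m x s') (m x s) s \<in> ?C \<and> t (m s' x) (m s x) s \<in> ?C"
      using C unfolding closed_subheap_def subheap_def by blast+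
    have CT: "?C \<subseteq> T" unfolding sim_class_def heap_sim_def by blast
    show ?thesis unfolding cls closed_subheap_def subheap_def
    proof (intro conjI ballI)
      show "f ` ?C \<subseteq> f ` T" using CT by blast
    next
      fix x y z assume "x \<in> f ` ?C" "y \<in> f ` ?C" "z \<in> f ` ?C"
      then obtain x0 y0 z0 where h: "x0 \<in> ?C" "y0 \<in> ?C" "z0 \<in> ?C"
        "x = f x0" "y = f y0" "z = f z0" by blast
      have T: "x0 \<in> T" "y0 \<in> T" "z0 \<in> T" using h CT by blast+
      have "t x0 y0 z0 \<in> ?C" using h Csub by simp
      moreover have "t' x y z = f (t x0 y0 z0)" using h T ft by simp
      ultimately show "t' x y z \<in> f ` ?C" by simp
    next
      fix s s' x assume "s \<in> f ` ?C" "s' \<in> f ` ?C" "x \<in> f ` T"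
      then obtain s0 s0' x0 where h: "s0 \<in> ?C" "s0' \<in> ?C" "x0 \<in> T"
        "s = f s0" "s' = f s0'" "x = f x0" by blast
      have i: "t (m x0 s0') (m x0 s0) s0 \<in> ?C" "t (m s0' x0) (m s0 x0) s0 \<in> ?C"
        using h Ccl by simp_all
      have T: "s0 \<in> T" "s0' \<in> T" using h CT by blast+
      have M: "m x0 s0' \<in> T" "m x0 s0 \<in> T" "m s0' x0 \<in> T" "m s0 x0 \<in> T" using h T mcl by simp_all
      have "t' (m' x s') (m' x s) s = f (t (m x0 s0') (m x0 s0) s0)" using h T M ft fm by simp
      then show "t' (m' x s') (m' x s) s \<in> f ` ?C" using i by simp
      have "t' (m' s' x) (m' s x) s = f (t (m s0' x0) (m s0 x0) s0)" using h T M ft fm by simp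
      then show "t' (m' s' x) (m' s x) s \<in> f ` ?C" using i by simp
    qed
  qed
  show ?thesis unfolding paragon_def using N C2 by blast
qed

lemma singleton_paragon:
  assumes hom: "pretruss_hom T t m T' t' m' f" and z: "z \<in> f ` T"
  shows "paragon (f ` T) t' m' {z}"
proof -
  have hT': "heap T' t'" using hom unfolding pretruss_hom_def pretruss_def by blast
  have fT: "f ` T \<subseteq> T'" using hom unfolding pretruss_hom_def by blast
  have as': "\<And>x y z v w. x\<in>T' \<Longrightarrow> y\<in>T' \<Longrightarrow> z\<in>T' \<Longrightarrow> v\<in>T' \<Longrightarrow> w\<in>T' \<Longrightarrow> t' x y (t' z v w) = t' (t' x y z) v w"
    and m1': "\<And>x y. x\<in>T' \<Longrightarrow> y\<in>T' \<Longrightarrow> t' x x y = y" and m2': "\<And>x y. x\<in>T' \<Longrightarrow> y\<in>T' \<Longrightarrow> t' y x x = y"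
    using hT' unfolding heap_def by blast+
  have zT: "z \<in> T'" using z fT by blast
  have N: "normal_subheap (f ` T) t' {z}"
    unfolding normal_subheap_def subheap_def using z zT fT by (auto simp: m1' m2')
  have C: "closed_subheap (f ` T) t' m' (sim_class (f ` T) t' {z} y)" for y
  proof -
    have "sim_class (f ` T) t' {z} y \<subseteq> {y}"
    proof
      fix c assume "c \<in> sim_class (f ` T) t' {z} y"
      then have c: "c \<in> T'" "y \<in> T'" "t' y c z = z" unfolding sim_class_def heap_sim_def using fT by auto
      have "t' (t' y c z) z c = t' y c (t' z z c)" using c zT as' by metis
      also have "\<dots> = y" using c zT m1' m2' by metis
      finally have "t' (t' y c z) z c = y" .
      then have "t' z z c = y" using c by simp
      then show "c \<in> {y}" using c zT by (simp add: m1')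
    qed
    note S1 = this
    have S2: "sim_class (f ` T) t' {z} y \<subseteq> f ` T" unfolding sim_class_def heap_sim_def by blast
    have mcl': "\<And>a b. a\<in>T' \<Longrightarrow> b\<in>T' \<Longrightarrow> m' a b \<in> T'"
      using hom unfolding pretruss_hom_def pretruss_def by blast
    show ?thesis unfolding closed_subheap_def subheap_def
    proof (intro conjI ballI)
      show "sim_class (f ` T) t' {z} y \<subseteq> f ` T" by (rule S2)
    next
      fix a b c assume h: "a \<in> sim_class (f ` T) t' {z} y" "b \<in> sim_class (f ` T) t' {z} y" "c \<in> sim_class (f ` T) t' {z} y"
      then have e: "a = y" "b = y" "c = y" using S1 by blast+
      have "y \<in> T'" using h(1) e S2 fT by blast
      then have "t' a b c = a" using e m1' by simp
      then show "t' a b c \<in> sim_class (f ` T) t' {z} y" using h(1) by simp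
    next
      fix a b x assume h: "a \<in> sim_class (f ` T) t' {z} y" "b \<in> sim_class (f ` T) t' {z} y" "x \<in> f ` T"
      then have e: "a = y" "b = y" using S1 by blast+
      have yT: "y \<in> T'" "x \<in> T'" using h e S2 fT by blast+
      have "t' (m' x b) (m' x a) a = a" "t' (m' b x) (m' a x) a = a" using e yT mcl' m1' by simp_all
      then show "t' (m' x b) (m' x a) a \<in> sim_class (f ` T) t' {z} y"
        and "t' (m' b x) (m' a x) a \<in> sim_class (f ` T) t' {z} y" using h(1) by simp_all
    qed
  qed
  show ?thesis unfolding paragon_def by (simp add: N C)
qed

theorem lemma3p13:
  fixes T :: "'a set" and t :: "'a \<Rightarrow> 'a \<Rightarrow> 'a \<Rightarrow> 'a" and m :: "'a \<Rightarrow> 'a \<Rightarrow> 'a"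
    and T' :: "'b set" and t' :: "'b \<Rightarrow> 'b \<Rightarrow> 'b \<Rightarrow> 'b" and m' :: "'b \<Rightarrow> 'b \<Rightarrow> 'b"
    and f :: "'a \<Rightarrow> 'b"
  assumes "pretruss_hom T t m T' t' m' f"
  shows "(\<forall>z\<in>f ` T. paragon T t m {x\<in>T. f x = z})
       \<and> (\<forall>P'. paragon (f ` T) t' m' P' \<longrightarrow> paragon T t m {x\<in>T. f x \<in> P'})
       \<and> (\<forall>P. paragon T t m P \<longrightarrow> paragon (f ` T) t' m' (f ` P))"
proof (intro conjI allI ballI impI)
  fix z assume "z \<in> f ` T"
  from part1b[OF assms singleton_paragon[OF assms this]]
  show "paragon T t m {x\<in>T. f x = z}" by simp
next
  fix P' assume "paragon (f ` T) t' m' P'"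
  then show "paragon T t m {x\<in>T. f x \<in> P'}" using part1b[OF assms] by blast
next
  fix P assume "paragon T t m P"
  then show "paragon (f ` T) t' m' (f ` P)" using part2[OF assms] by blast
qed

end
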